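(* Under the hypotheses and construction described in the context, the function $d$ is a metric on $S$ and satisfies $0\le d\le 3$.
   Context: $S$ is a compact Hausdorff topological Clifford semigroup (inverse semigroup with $xx^{-1}=x^{-1}x$ for all $x$, continuous multiplication and inversion) such that: (B1) $E(S)$ (idempotents, ordered by $e\le f\iff ef=e$, subspace topology) is a metrizable perfect semilattice; (B2) each $G_e:=\{x: xx^{-1}=e\}$ is compact metrizable; (B3) the functor $e\mapsto G_e$ is inverse-limit preserving. Elements of $S$ are written $(e,g)$ with $g\in G_e$; for $e\le f$, $\varphi_{f,e}\colon G_f\to G_e$, $x\mapsto ex$. Way-below: $x\ll y$ if for every nonempty up-directed $D$ whose supremum exists with $y\le \sup D$ there is $d\in D$ with $x\le d$; $x\ll y\Rightarrow x\le y$. A perfect semilattice is a compact Hausdorff topological semilattice in which every point has a neighbourhood basis of open subsemilattices; it is a complete continuous semilattice whose topology is the Lawson topology, so $\twoheaduparrow b:=\{e: b\ll e\}$ is open, and $E(S)$ has a minimum $0$. A basis of $E(S)$ is $\mathcal B\subseteq E(S)$ such that for each $x$, $\{b\in\mathcal B: b\ll x\}$ is up-directed with supremum $x$. Inverse-limit preserving: for every nonempty up-directed $D$ with $\sup D=e$, $g\mapsto(\varphi_{e,b}(g))_{b\in D}$ is an isomorphism of topological groups $G_e\to\varprojlim_{b\in D}G_b$. Construction: a compatible metric $\rho\le1$ on $E(S)$; a countable basis $\mathcal B=\{b_j\}_{j\ge1}$; for $b\in\mathcal B$ a compatible metric $d_b\le1$ on $G_b$, a point $c_b\in G_b$, a dense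 sequence $\{t_{b,k}\}_{k\ge1}\subseteq G_b$; $a_b(e):=\rho(e,E(S)\setminus\twoheaduparrow b)$ for $b\neq0$, $a_0\equiv1$; $\widehat\varphi_{e,b}=\varphi_{e,b}$ if $b\le e$, constant $c_b$ otherwise; $P_b((e,g),(f,h)) := |a_b(e)-a_b(f)| + \sum_{k\ge1}2^{-k}|a_b(e)d_b(\widehat\varphi_{e,b}(g),t_{b,k}) - a_b(f)d_b(\widehat\varphi_{f,b}(h),t_{b,k})|$, $d((e,g),(f,h)) := \rho(e,f)+\sum_{j\ge1}2^{-j}P_{b_j}((e,g),(f,h))$. *)

theory Defs
  imports "HOL-Analysis.Analysis"
begin

text \<open>The semigroup S is the whole carrier type 'a, with multiplication (*) and
  inversion given by the type class operation inverse.\<close>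

definition idems :: "'a::{semigroup_mult} set" where
  "idems = {e. e * e = e}"

definition sleq :: "'a::semigroup_mult \<Rightarrow> 'a \<Rightarrow> bool" where
  "sleq e f \<longleftrightarrow> e * f = e"

definition grp :: "'a::{semigroup_mult,inverse} \<Rightarrow> 'a set" where
  "grp e = {x. x * inverse x = e}"

definition clifford_inverse_semigroup :: "'a::{semigroup_mult,inverse} itself \<Rightarrow> bool" where
  "clifford_inverse_semigroup _ \<longleftrightarrow>
     (\<forall>x::'a. x * inverse x * x = x \<and> inverse x * x * inverse x = inverse x
        \<and> (\<forall>y. x * y * x = x \<and> y * x * y = y \<longrightarrow> y = inverse x)
        \<and> x * inverse x = inverse x * x)"

definition compact_hausdorff_topological_semigroup :: "'a::{semigroup_mult,inverse,topological_space} itself \<Rightarrow> bool" where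
  "compact_hausdorff_topological_semigroup _ \<longleftrightarrow>
     compact (UNIV::'a set) \<and> Hausdorff_space (euclidean::'a topology)
     \<and> continuous_on UNIV (\<lambda>p::'a\<times>'a. fst p * snd p)
     \<and> continuous_on UNIV (inverse::'a\<Rightarrow>'a)"

definition up_directed :: "'a::semigroup_mult set \<Rightarrow> bool" where
  "up_directed D \<longleftrightarrow> D \<noteq> {} \<and> (\<forall>x\<in>D. \<forall>y\<in>D. \<exists>z\<in>D. sleq x z \<and> sleq y z)"

definition is_sup :: "'a::semigroup_mult set \<Rightarrow> 'a \<Rightarrow> bool" where
  "is_sup D s \<longleftrightarrow> s \<in> idems \<and> (\<forall>x\<in>D. sleq x s)
      \<and> (\<forall>u\<in>idems. (\<forall>x\<in>D. sleq x u) \<longrightarrow> sleq s u)"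

definition way_below :: "'a::semigroup_mult \<Rightarrow> 'a \<Rightarrow> bool" where
  "way_below x y \<longleftrightarrow> (\<forall>D s. D \<subseteq> idems \<and> D \<noteq> {} \<and> up_directed D \<and> is_sup D s \<and> sleq y s
      \<longrightarrow> (\<exists>d\<in>D. sleq x d))"

definition perfect_semilattice_E :: "'a::{semigroup_mult,topological_space} itself \<Rightarrow> bool" where
  "perfect_semilattice_E _ \<longleftrightarrow>
     compact (idems::'a set) \<and> Hausdorff_space (top_of_set (idems::'a set))
     \<and> (\<forall>e\<in>(idems::'a set). \<forall>f\<in>idems. e * f \<in> idems \<and> e * f = f * e)
     \<and> continuous_on (idems \<times> idems) (\<lambda>p::'a\<times>'a. fst p * snd p)
     \<and> (\<forall>e\<in>(idems::'a set). \<forall>U. openin (top_of_set idems) U \<and> e \<in> U \<longrightarrow>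
          (\<exists>V. openin (top_of_set idems) V \<and> e \<in> V \<and> V \<subseteq> U \<and> (\<forall>x\<in>V. \<forall>y\<in>V. x * y \<in> V)))"

definition is_basis :: "'a::semigroup_mult set \<Rightarrow> bool" where
  "is_basis B \<longleftrightarrow> B \<subseteq> idems \<and>
     (\<forall>x\<in>idems. up_directed {b\<in>B. way_below b x} \<and> is_sup {b\<in>B. way_below b x} x)"

text \<open>Inverse-limit preservation (B3): for nonempty up-directed D with sup e, the map
  g \<mapsto> (bg)_{b\<in>D} is an isomorphism of topological groups onto the inverse limit
  (a subspace of the product of the groups G_b).\<close>
definition inv_limit :: "'a::{semigroup_mult,inverse} set \<Rightarrow> ('a \<Rightarrow> 'a) set" where
  "inv_limit D = {x \<in> PiE D grp. \<forall>b\<in>D. \<forall>b'\<in>D. sleq b' b \<longrightarrow> b' * x b = x b'}"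

definition inverse_limit_preserving :: "'a::{semigroup_mult,inverse,topological_space} itself \<Rightarrow> bool" where
  "inverse_limit_preserving _ \<longleftrightarrow>
     (\<forall>(D::'a set) e. D \<subseteq> idems \<and> D \<noteq> {} \<and> up_directed D \<and> is_sup D e \<longrightarrow>
        (let f = (\<lambda>g. restrict (\<lambda>b. b * g) D) in
          homeomorphic_map (top_of_set (grp e))
             (subtopology (product_topology (\<lambda>b. top_of_set (grp b)) D) (inv_limit D)) f
          \<and> f ` grp e = inv_limit D
          \<and> (\<forall>g\<in>grp e. \<forall>h\<in>grp e. f (g * h) = (\<lambda>b\<in>D. f g b * f h b))))"

definition compatible_metric :: "'a::topological_space set \<Rightarrow> ('a \<Rightarrow> 'a \<Rightarrow> real) \<Rightarrow> bool" where
  "compatible_metric A m \<longleftrightarrow> Metric_space A m \<and> Metric_space.mtopology A m = top_of_set A"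

definition pdist :: "('a \<Rightarrow> 'a \<Rightarrow> real) \<Rightarrow> 'a \<Rightarrow> 'a set \<Rightarrow> real" where
  "pdist m x A = Inf ((\<lambda>a. m x a) ` A)"

text \<open>a_b(e); b is the minimum 0 of E(S) iff it is below every idempotent.\<close>
definition acoef :: "('a::semigroup_mult \<Rightarrow> 'a \<Rightarrow> real) \<Rightarrow> 'a \<Rightarrow> 'a \<Rightarrow> real" where
  "acoef \<rho> b e = (if (\<forall>x\<in>idems. sleq b x) then 1
                   else pdist \<rho> e (idems - {x\<in>idems. way_below b x}))"

definition phat :: "('a \<Rightarrow> 'a) \<Rightarrow> 'a::{semigroup_mult} \<Rightarrow> 'a \<Rightarrow> 'a \<Rightarrow> 'a" where
  "phat c e b g = (if sleq b e then b * g else c b)"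

text \<open>Element x is written (e,g) with e = x x^{-1} and g = x.\<close>
definition Pb :: "('a::{semigroup_mult,inverse} \<Rightarrow> 'a \<Rightarrow> real) \<Rightarrow> ('a \<Rightarrow> 'a \<Rightarrow> 'a \<Rightarrow> real)
     \<Rightarrow> ('a \<Rightarrow> 'a) \<Rightarrow> ('a \<Rightarrow> nat \<Rightarrow> 'a) \<Rightarrow> 'a \<Rightarrow> 'a \<Rightarrow> 'a \<Rightarrow> real" where
  "Pb \<rho> db c t b x y =
     (let e = x * inverse x; f = y * inverse y in
       \<bar>acoef \<rho> b e - acoef \<rho> b f\<bar>
       + (\<Sum>k. (1/2) ^ Suc k *
            \<bar>acoef \<rho> b e * db b (phat c e b x) (t b (Suc k))
             - acoef \<rho> b f * db b (phat c f b y) (t b (Suc k))\<bar>))"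

definition dmet :: "('a::{semigroup_mult,inverse} \<Rightarrow> 'a \<Rightarrow> real) \<Rightarrow> (nat \<Rightarrow> 'a) \<Rightarrow> ('a \<Rightarrow> 'a \<Rightarrow> 'a \<Rightarrow> real)
     \<Rightarrow> ('a \<Rightarrow> 'a) \<Rightarrow> ('a \<Rightarrow> nat \<Rightarrow> 'a) \<Rightarrow> 'a \<Rightarrow> 'a \<Rightarrow> real" where
  "dmet \<rho> bs db c t x y =
     \<rho> (x * inverse x) (y * inverse y) + (\<Sum>j. (1/2) ^ Suc j * Pb \<rho> db c t (bs (Suc j)) x y)"

end

theory Submission
  imports Defs
begin

lemma sleq_trans: "sleq a b \<Longrightarrow> sleq b c \<Longrightarrow> sleq a c"
  unfolding sleq_def by (metis mult.assoc)

lemma psl_unfold: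
  assumes "perfect_semilattice_E TYPE('a::{semigroup_mult,topological_space})"
  shows "compact_space (top_of_set (idems::'a set))"
    "Hausdorff_space (top_of_set (idems::'a set))"
    "\<And>e f. e \<in> (idems::'a set) \<Longrightarrow> f \<in> idems \<Longrightarrow> e * f \<in> idems"
    "\<And>e f. e \<in> (idems::'a set) \<Longrightarrow> f \<in> idems \<Longrightarrow> e * f = f * e"
    "continuous_on ((idems::'a set) \<times> idems) (\<lambda>p. fst p * snd p)"
    "\<And>e U. e \<in> (idems::'a set) \<Longrightarrow> openin (top_of_set idems) U \<Longrightarrow> e \<in> U \<Longrightarrow>
        (\<exists>V. openin (top_of_set idems) V \<and> e \<in> V \<and> V \<subseteq> U \<and> (\<forall>x\<in>V. \<forall>y\<in>V. x * y \<in> V))"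
proof -
  note A = assms[unfolded perfect_semilattice_E_def]
  show "compact_space (top_of_set (idems::'a set))" using A by (simp add: compact_space_subtopology)
  show "Hausdorff_space (top_of_set (idems::'a set))" using A by blast
  show "\<And>e f. e \<in> (idems::'a set) \<Longrightarrow> f \<in> idems \<Longrightarrow> e * f \<in> idems" using A by blast
  show "\<And>e f. e \<in> (idems::'a set) \<Longrightarrow> f \<in> idems \<Longrightarrow> e * f = f * e" using A by blast
  show "continuous_on ((idems::'a set) \<times> idems) (\<lambda>p. fst p * snd p)" using A by blast
  show "\<And>e U. e \<in> (idems::'a set) \<Longrightarrow> openin (top_of_set idems) U \<Longrightarrow> e \<in> U \<Longrightarrow>
        (\<exists>V. openin (top_of_set idems) V \<and> e \<in> V \<and> V \<subseteq> U \<and> (\<forall>x\<in>V. \<forall>y\<in>V. x * y \<in> V))"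
    using A by blast
qed

lemma cont_right:
  assumes "perfect_semilattice_E TYPE('a::{semigroup_mult,topological_space})" "w \<in> (idems::'a set)"
  shows "continuous_map (top_of_set (idems::'a set)) (top_of_set idems) (\<lambda>x. x * w)"
proof -
  have "continuous_on idems (\<lambda>x::'a. fst (x, w) * snd (x, w))"
    apply (rule continuous_on_compose2[OF psl_unfold(5)[OF assms(1)], of _ "\<lambda>x. (x, w)"])
    using assms(2) by (auto intro!: continuous_intros)
  then show ?thesis using psl_unfold(3)[OF assms(1) _ assms(2)] by auto
qed

lemma closed_below:
  assumes "perfect_semilattice_E TYPE('a::{semigroup_mult,topological_space})" "u \<in> (idems::'a set)"
  shows "closedin (top_of_set (idems::'a set)) {x\<in>idems. x * u = x}"
  using closedin_continuous_maps_eq[OF psl_unfold(2)[OF assms(1)] cont_right[OF assms] continuous_map_id]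
  by simp

lemma closed_above:
  assumes "perfect_semilattice_E TYPE('a::{semigroup_mult,topological_space})" "v \<in> (idems::'a set)"
  shows "closedin (top_of_set (idems::'a set)) {x\<in>idems. v * x = v}"
proof -
  have "closedin (top_of_set (idems::'a set)) {x\<in>topspace (top_of_set idems). x * v = (\<lambda>x. v) x}"
    by (rule closedin_continuous_maps_eq[OF psl_unfold(2)[OF assms(1)] cont_right[OF assms]])
      (use assms(2) in auto)
  moreover have "{x\<in>topspace (top_of_set idems). x * v = (\<lambda>x. v) x} = {x\<in>idems. v * x = v}"
    using psl_unfold(4)[OF assms(1) _ assms(2)] by auto
  ultimately show ?thesis by simp
qed

lemma dir_ub:
  assumes "finite G" "G \<subseteq> D" "up_directed D"
  shows "\<exists>z\<in>D. \<forall>g\<in>G. sleq g z"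
  using assms
proof (induction G rule: finite_induct)
  case empty
  then show ?case unfolding up_directed_def by auto
next
  case (insert x F)
  then obtain z where z: "z \<in> D" "\<forall>g\<in>F. sleq g z" by auto
  obtain z' where "z' \<in> D" "sleq x z'" "sleq z z'"
    using insert.prems z(1) unfolding up_directed_def by blast
  then show ?case using z sleq_trans by blast
qed

lemma dir_exists:
  assumes B1: "perfect_semilattice_E TYPE('a::{semigroup_mult,topological_space})"
    and D: "D \<subseteq> (idems::'a set)" "up_directed D" "is_sup D s"
    and U: "openin (top_of_set idems) U" "s \<in> U"
  shows "\<exists>d\<in>D. d \<in> U"
proof (rule ccontr)
  assume nd: "\<not> (\<exists>d\<in>D. d \<in> U)"
  have sI: "s \<in> idems" using D(3) unfolding is_sup_def by auto
  define F where "F d = (idems - U) \<inter> {x\<in>idems. d * x = d} \<inter> {x\<in>idems. x * s = x}" for d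
  have cl: "closedin (top_of_set idems) (F d)" if "d \<in> D" for d
  proof -
    have c1: "closedin (top_of_set idems) (idems - U)"
      using closedin_diff[OF closedin_topspace U(1)] by simp
    have "d \<in> idems" using that D(1) by blast
    then show ?thesis unfolding F_def
      by (intro closedin_Int c1 closed_above[OF B1] closed_below[OF B1 sI])
  qed
  have fip: "\<Inter>\<F> \<noteq> {}" if "finite \<F>" "\<F> \<subseteq> F ` D" for \<F>
  proof -
    from finite_subset_image[OF that] obtain G where G: "G \<subseteq> D" "finite G" "\<F> = F ` G"
      by blast
    obtain z where z: "z \<in> D" "\<forall>g\<in>G. sleq g z" using dir_ub[OF G(2,1) D(2)] by blast
    have zI: "z \<in> idems" "z \<notin> U" "z * s = z"
      using z(1) nd D(1,3) unfolding is_sup_def sleq_def by auto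
    have "z \<in> F g" if "g \<in> G" for g
      using zI z(2) that unfolding F_def sleq_def by simp
    then have "z \<in> \<Inter>\<F>" using G(3) by blast
    then show ?thesis by auto
  qed
  have "\<Inter>(F ` D) \<noteq> {}"
    using psl_unfold(1)[OF B1] unfolding compact_space_fip using cl fip by blast
  then obtain q where q: "\<And>d. d \<in> D \<Longrightarrow> q \<in> F d" by auto
  obtain d0 where "d0 \<in> D" using D(2) unfolding up_directed_def by auto
  then have qI: "q \<in> idems" "q \<notin> U" "q * s = q" using q unfolding F_def by auto
  have "\<forall>d\<in>D. sleq d q" using q unfolding F_def sleq_def by auto
  then have "sleq s q" using D(3) qI unfolding is_sup_def by auto
  then have "q = s" using qI psl_unfold(4)[OF B1 sI qI(1)] unfolding sleq_def by auto
  then show False using qI U by auto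
qed

lemma min_exists:
  assumes B1: "perfect_semilattice_E TYPE('a::{semigroup_mult,topological_space})"
    and W: "W \<subseteq> (idems::'a set)" "W \<noteq> {}" "\<forall>x\<in>W. \<forall>y\<in>W. x * y \<in> W"
  shows "\<exists>m \<in> top_of_set idems closure_of W. \<forall>w\<in>W. sleq m w"
proof -
  define F where "F w = (top_of_set idems closure_of W) \<inter> {x\<in>idems. x * w = x}" for w
  have cl: "closedin (top_of_set idems) (F w)" if "w \<in> W" for w
  proof -
    have "w \<in> idems" using that W(1) by blast
    then show ?thesis unfolding F_def
      by (intro closedin_Int closedin_closure_of closed_below[OF B1])
  qed
  have lb: "\<exists>z\<in>W. \<forall>g\<in>G. sleq z g" if "finite G" "G \<subseteq> W" for G
    using that
  proof (induction G rule: finite_induct)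
    case empty
    then show ?case using W(2) by auto
  next
    case (insert x G)
    then obtain z where z: "z \<in> W" "\<forall>g\<in>G. sleq z g" by auto
    have xW: "x \<in> W" using insert by auto
    have "z * x \<in> W" using W(3) z xW by auto
    moreover have "sleq (z * x) x" using W(1) xW unfolding sleq_def idems_def
      by (auto simp: mult.assoc)
    moreover have "sleq (z * x) g" if "g \<in> G" for g
    proof -
      have gW: "g \<in> W" using that insert.prems by auto
      have "x * g = g * x"
        using psl_unfold(4)[OF B1, of x g] W(1) xW gW by auto
      then have "z * x * g = z * g * x"
        by (simp add: mult.assoc)
      then show ?thesis using z that unfolding sleq_def by simp
    qed
    ultimately show ?case by auto
  qed
  have fip: "\<Inter>\<F> \<noteq> {}" if "finite \<F>" "\<F> \<subseteq> F ` W" for \<F>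
  proof -
    from finite_subset_image[OF that] obtain G where G: "G \<subseteq> W" "finite G" "\<F> = F ` G"
      by blast
    obtain z where z: "z \<in> W" "\<forall>g\<in>G. sleq z g" using lb G by blast
    have "z \<in> top_of_set idems closure_of W"
      using closure_of_subset[of W "top_of_set idems"] W(1) z by auto
    have "z \<in> F g" if "g \<in> G" for g
      using \<open>z \<in> top_of_set idems closure_of W\<close> z W(1) G(1) that unfolding F_def sleq_def by auto
    then have "z \<in> \<Inter>\<F>" using G(3) by blast
    then show ?thesis by auto
  qed
  have "\<Inter>(F ` W) \<noteq> {}"
    using psl_unfold(1)[OF B1] unfolding compact_space_fip using cl fip by blast
  then obtain q where q: "\<And>w. w \<in> W \<Longrightarrow> q \<in> F w" by auto
  obtain w0 where "w0 \<in> W" using W(2) by auto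
  then have "q \<in> top_of_set idems closure_of W" using q unfolding F_def by auto
  moreover have "\<forall>w\<in>W. sleq q w" using q unfolding F_def sleq_def by auto
  ultimately show ?thesis by auto
qed

lemma wb_le:
  assumes "x \<in> idems" "way_below b x"
  shows "sleq b x"
proof -
  have "up_directed {x}" using assms(1) unfolding up_directed_def sleq_def idems_def by auto
  moreover have "is_sup {x} x" using assms(1) unfolding is_sup_def sleq_def idems_def by auto
  moreover have "sleq x x" using assms(1) unfolding sleq_def idems_def by auto
  ultimately show ?thesis using assms unfolding way_below_def by blast
qed

lemma lawson:
  assumes B1: "perfect_semilattice_E TYPE('a::{semigroup_mult,topological_space})"
    and e: "e \<in> (idems::'a set)" and wb: "way_below b e"
  shows "\<exists>W. openin (top_of_set idems) W \<and> e \<in> W \<and> (\<forall>w\<in>W. way_below b w)"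
proof -
  let ?X = "top_of_set (idems::'a set)"
  have key: "\<exists>W m. openin ?X W \<and> e \<in> W \<and> W \<subseteq> U \<and> m \<in> ?X closure_of W \<and> (\<forall>w\<in>W. sleq m w)"
    if U: "openin ?X U" "e \<in> U" for U
  proof -
    obtain V where V: "openin ?X V" "e \<in> V" "V \<subseteq> U" "\<forall>x\<in>V. \<forall>y\<in>V. x * y \<in> V"
      using psl_unfold(6)[OF B1 e U] by blast
    have "V \<subseteq> idems" using openin_subset[OF V(1)] by simp
    then obtain m where "m \<in> ?X closure_of V" "\<forall>w\<in>V. sleq m w"
      using min_exists[OF B1 _ _ V(4)] V(2) by blast
    then show ?thesis using V by blast
  qed
  define D where "D = {m\<in>idems. \<exists>W. openin ?X W \<and> e \<in> W \<and> (\<forall>w\<in>W. sleq m w)}"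
  have inD: "m \<in> D" if "openin ?X W" "e \<in> W" "m \<in> ?X closure_of W" "\<forall>w\<in>W. sleq m w" for m W
    using that closure_of_subset_topspace[of ?X W] unfolding D_def by auto
  have DI: "D \<subseteq> idems" unfolding D_def by auto
  obtain W0 m0 where "openin ?X W0" "e \<in> W0" "m0 \<in> ?X closure_of W0" "\<forall>w\<in>W0. sleq m0 w"
    using key[of idems] e by auto
  then have "m0 \<in> D" using inD by blast
  then have Dne: "D \<noteq> {}" by auto
  have updir: "up_directed D" unfolding up_directed_def
  proof (intro conjI Dne ballI)
    fix m1 m2 assume m1: "m1 \<in> D" and m2: "m2 \<in> D"
    obtain W1 where W1: "openin ?X W1" "e \<in> W1" "\<forall>w\<in>W1. sleq m1 w" using m1 unfolding D_def by auto
    obtain W2 where W2: "openin ?X W2" "e \<in> W2" "\<forall>w\<in>W2. sleq m2 w" using m2 unfolding D_def by auto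
    obtain W m where W: "openin ?X W" "e \<in> W" "W \<subseteq> W1 \<inter> W2" "m \<in> ?X closure_of W" "\<forall>w\<in>W. sleq m w"
      using key[of "W1 \<inter> W2"] W1 W2 by blast
    have "m \<in> D" using inD W by blast
    moreover have "sleq mi m" if "mi \<in> D" "Wi \<subseteq> idems" "W \<subseteq> Wi" "\<forall>w\<in>Wi. sleq mi w" for mi Wi
    proof -
      have miI: "mi \<in> idems" using that(1) DI by blast
      have "Wi \<subseteq> {x\<in>idems. mi * x = mi}" using that(2,4) unfolding sleq_def by auto
      then have "?X closure_of Wi \<subseteq> {x\<in>idems. mi * x = mi}"
        by (rule closure_of_minimal[OF _ closed_above[OF B1 miI]])
      moreover have "?X closure_of W \<subseteq> ?X closure_of Wi" using that(3) by (rule closure_of_mono)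
      ultimately show ?thesis using W(4) unfolding sleq_def by auto
    qed
    then have "sleq m1 m" "sleq m2 m"
      using m1 m2 W(3) W1(3) W2(3) openin_subset[OF W1(1)] openin_subset[OF W2(1)] by auto
    ultimately show "\<exists>z\<in>D. sleq m1 z \<and> sleq m2 z" by blast
  qed
  have sup: "is_sup D e" unfolding is_sup_def
  proof (intro conjI e ballI impI)
    fix m assume "m \<in> D" then show "sleq m e" unfolding D_def by auto
  next
    fix u assume u: "u \<in> idems" "\<forall>x\<in>D. sleq x u"
    show "sleq e u"
    proof (rule ccontr)
      assume ne: "\<not> sleq e u"
      let ?C = "{x\<in>idems. x * u = x}"
      have C: "closedin ?X ?C" by (rule closed_below[OF B1 u(1)])
      have "e \<in> topspace ?X - ?C" using e ne unfolding sleq_def by auto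
      moreover have reg: "regular_space ?X"
        by (rule compact_Hausdorff_imp_regular_space[OF psl_unfold(1,2)[OF B1]])
      ultimately have "\<exists>U V. openin ?X U \<and> openin ?X V \<and> e \<in> U \<and> ?C \<subseteq> V \<and> disjnt U V"
        using reg[unfolded regular_space_def, rule_format, OF conjI[OF C]] by simp
      then obtain U V where UV: "openin ?X U" "openin ?X V" "e \<in> U" "?C \<subseteq> V" "disjnt U V"
        by blast
      obtain W m where W: "openin ?X W" "e \<in> W" "W \<subseteq> U" "m \<in> ?X closure_of W" "\<forall>w\<in>W. sleq m w"
        using key[OF UV(1,3)] by blast
      have "U \<subseteq> topspace ?X - V" using UV(5) openin_subset[OF UV(1)] unfolding disjnt_def by auto
      then have "?X closure_of U \<subseteq> topspace ?X - V"
        by (rule closure_of_minimal) (use UV(2) in auto)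
      moreover have "?X closure_of W \<subseteq> ?X closure_of U" using W(3) by (rule closure_of_mono)
      ultimately have "m \<notin> V" using W(4) by blast
      moreover have "m \<in> D" using inD W by blast
      then have "m \<in> ?C" using u(2) DI unfolding sleq_def by auto
      ultimately show False using UV(4) by blast
    qed
  qed
  have "sleq e e" using e unfolding sleq_def idems_def by auto
  then have "\<exists>d\<in>D. sleq b d"
    by (rule wb[unfolded way_below_def, rule_format, OF conjI[OF DI conjI[OF Dne conjI[OF updir conjI[OF sup]]]]])
  then obtain m where m: "m \<in> D" "sleq b m" by blast
  then obtain W where W: "openin ?X W" "e \<in> W" "\<forall>w\<in>W. sleq m w" unfolding D_def by auto
  have "way_below b w" if w: "w \<in> W" for w
    unfolding way_below_def
  proof (intro allI impI)
    fix D2 s assume H: "D2 \<subseteq> idems \<and> D2 \<noteq> {} \<and> up_directed D2 \<and> is_sup D2 s \<and> sleq w s"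
    have wI: "w \<in> idems" using openin_subset[OF W(1)] w by auto
    have sI: "s \<in> idems" using H unfolding is_sup_def by auto
    let ?U = "{x \<in> topspace ?X. x * w \<in> W}"
    have Uo: "openin ?X ?U"
      by (rule openin_continuous_map_preimage[OF cont_right[OF B1 wI] W(1)])
    have "s * w = w" using H psl_unfold(4)[OF B1 wI sI] unfolding sleq_def by auto
    then have "s \<in> ?U" using sI w by auto
    then obtain d where d: "d \<in> D2" "d \<in> ?U" using dir_exists[OF B1 _ _ _ Uo] H by blast
    have dI: "d \<in> idems" using d H by auto
    have mdw: "m * (d * w) = m" using d W(3) unfolding sleq_def by auto
    have dd: "d * d = d" using dI by (simp add: idems_def)
    have wd: "w * d = d * w" by (rule psl_unfold(4)[OF B1 wI dI])
    have "d * w * d = d * (w * d)" by (simp add: mult.assoc)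
    also have "\<dots> = (d * d) * w" by (simp add: wd mult.assoc)
    also have "\<dots> = d * w" by (simp add: dd)
    finally have dwd: "d * w * d = d * w" .
    have "m * d = m * (d * w) * d" by (simp add: mdw)
    also have "\<dots> = m * (d * w * d)" by (simp add: mult.assoc)
    also have "\<dots> = m" by (simp add: dwd mdw)
    finally have md: "m * d = m" .
    have "b * d = (b * m) * d" using m(2) unfolding sleq_def by simp
    also have "\<dots> = b * (m * d)" by (simp add: mult.assoc)
    also have "\<dots> = b" using md m(2) unfolding sleq_def by simp
    finally have "b * d = b" .
    then show "\<exists>d\<in>D2. sleq b d" using d(1) unfolding sleq_def by blast
  qed
  then show ?thesis using W by blast
qed

lemma e_idem:
  assumes Cl: "clifford_inverse_semigroup TYPE('a::{semigroup_mult,inverse})"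
  shows "(x::'a) * inverse x \<in> idems"
proof -
  have "x * inverse x * x = x" using Cl unfolding clifford_inverse_semigroup_def by blast
  then have "x * inverse x * (x * inverse x) = x * inverse x" by (metis mult.assoc)
  then show ?thesis unfolding idems_def by simp
qed

lemma grp_mult:
  assumes Cl: "clifford_inverse_semigroup TYPE('a::{semigroup_mult,inverse,topological_space})"
    and B1: "perfect_semilattice_E TYPE('a)"
    and b: "b \<in> (idems::'a set)" and le: "sleq b (x * inverse x)"
  shows "b * x \<in> grp b"
proof -
  define e where "e = x * inverse x"
  have eI: "e \<in> idems" unfolding e_def by (rule e_idem[OF Cl])
  have be: "b * e = b" using le unfolding sleq_def e_def by simp
  have eb: "e * b = b" using be psl_unfold(4)[OF B1 b eI] by simp
  have bb: "b * b = b" using b unfolding idems_def by simp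
  have bbz: "b * (b * z) = b * z" for z by (simp add: mult.assoc[symmetric] bb)
  have xiz: "x * (inverse x * z) = e * z" for z by (simp add: e_def mult.assoc)
  have bez: "b * (e * z) = b * z" for z by (simp add: mult.assoc[symmetric] be)
  have ebz: "e * (b * z) = b * z" for z by (simp add: mult.assoc[symmetric] eb)
  let ?y = "inverse x * b"
  have h1: "b * x * ?y * (b * x) = b * x"
    by (simp add: mult.assoc bbz xiz bez ebz)
  have h2: "?y * (b * x) * ?y = ?y"
    by (simp add: mult.assoc bbz xiz bez ebz eb bb)
  have "?y = inverse (b * x)"
    using Cl h1 h2 unfolding clifford_inverse_semigroup_def by blast
  then have "b * x * inverse (b * x) = b * (x * (inverse x * b))" by (simp add: mult.assoc)
  also have "\<dots> = b" by (simp add: xiz eb bb)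
  finally show ?thesis unfolding grp_def by simp
qed

lemma half_sum:
  fixes g :: "nat \<Rightarrow> real"
  assumes "\<And>k. 0 \<le> g k" "\<And>k. g k \<le> B"
  shows "summable (\<lambda>k. (1/2::real)^Suc k * g k)" "0 \<le> (\<Sum>k. (1/2::real)^Suc k * g k)"
    "(\<Sum>k. (1/2::real)^Suc k * g k) \<le> B"
proof -
  have gs: "(\<lambda>k. B * (1/2::real)^Suc k) sums (B * 1)" by (rule sums_mult[OF power_half_series])
  have le: "(1/2::real)^Suc k * g k \<le> B * (1/2::real)^Suc k" for k
    using assms(2)[of k] by (simp add: mult.commute)
  have nn: "0 \<le> (1/2::real)^Suc k * g k" for k using assms(1)[of k] by simp
  show s: "summable (\<lambda>k. (1/2::real)^Suc k * g k)"
    by (rule summable_comparison_test'[OF sums_summable[OF gs], of 0]) (use le nn in auto)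
  show "0 \<le> (\<Sum>k. (1/2::real)^Suc k * g k)" by (rule suminf_nonneg[OF s nn])
  have "(\<Sum>k. (1/2::real)^Suc k * g k) \<le> (\<Sum>k. B * (1/2::real)^Suc k)"
    by (rule suminf_le[OF le s sums_summable[OF gs]])
  also have "\<dots> = B" using sums_unique[OF gs] by simp
  finally show "(\<Sum>k. (1/2::real)^Suc k * g k) \<le> B" .
qed

lemma dense_sep:
  assumes M: "Metric_space M d" and cl: "Metric_space.mtopology M d closure_of T = M"
    and T: "T \<subseteq> M" and p: "p \<in> M" and q: "q \<in> M" and eq: "\<forall>z\<in>T. d p z = d q z"
  shows "p = q"
proof -
  interpret Metric_space M d by (rule M)
  have le: "d p q < 2 * r" if r: "r > 0" for r
  proof -
    have "p \<in> mtopology closure_of T" using cl p by simp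
    then obtain z where z: "z \<in> T" "z \<in> mball p r" using r unfolding metric_closure_of by blast
    then have "d p z < r" by simp
    moreover have "d p q \<le> d p z + d z q" using triangle[OF p _ q] z T by auto
    moreover have "d z q = d p z" using eq z commute by metis
    ultimately show ?thesis by linarith
  qed
  have "d p q = 0"
  proof (rule ccontr)
    assume "d p q \<noteq> 0"
    then have "d p q > 0" using nonneg[of p q] by linarith
    then show False using le[of "d p q / 4"] by linarith
  qed
  then show ?thesis using p q by simp
qed

lemma acoef_bounds:
  assumes M: "Metric_space idems \<rho>" and le1: "\<forall>e\<in>idems. \<forall>f\<in>idems. \<rho> e f \<le> 1"
    and e: "e \<in> idems"
  shows "0 \<le> acoef \<rho> b e \<and> acoef \<rho> b e \<le> 1"
proof (cases "\<forall>x\<in>idems. sleq b x")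
  case True
  then show ?thesis by (simp add: acoef_def)
next
  case False
  let ?A = "idems - {x\<in>idems. way_below b x}"
  have Ane: "?A \<noteq> {}"
  proof
    assume "?A = {}"
    then have "\<forall>x\<in>idems. sleq b x" using wb_le by blast
    then show False using False by blast
  qed
  then obtain a0 where a0: "a0 \<in> ?A" by blast
  have nn: "\<forall>y\<in>(\<lambda>a. \<rho> e a) ` ?A. 0 \<le> y" using Metric_space.nonneg[OF M] by auto
  have "0 \<le> Inf ((\<lambda>a. \<rho> e a) ` ?A)" by (rule cInf_greatest) (use Ane nn in auto)
  moreover have "Inf ((\<lambda>a. \<rho> e a) ` ?A) \<le> \<rho> e a0"
    by (rule cInf_lower) (use a0 nn in \<open>auto simp: bdd_below_def\<close>)
  moreover have "\<rho> e a0 \<le> 1" using le1 e a0 by auto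
  ultimately show ?thesis using False by (simp add: acoef_def pdist_def)
qed

lemma acoef_pos:
  assumes B1: "perfect_semilattice_E TYPE('a::{semigroup_mult,topological_space})"
    and cm: "compatible_metric (idems::'a set) \<rho>" and e: "e \<in> (idems::'a set)"
    and wb: "way_below b e"
  shows "0 < acoef \<rho> b e"
proof (cases "\<forall>x\<in>idems. sleq b x")
  case True
  then show ?thesis by (simp add: acoef_def)
next
  case False
  let ?A = "idems - {x\<in>idems. way_below b x}"
  have Ane: "?A \<noteq> {}"
  proof
    assume "?A = {}"
    then have "\<forall>x\<in>idems. sleq b x" using wb_le by blast
    then show False using False by blast
  qed
  obtain W where W: "openin (top_of_set idems) W" "e \<in> W" "\<forall>w\<in>W. way_below b w"
    using lawson[OF B1 e wb] by blast
  interpret Metric_space idems \<rho> using cm unfolding compatible_metric_def by blast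
  have "openin mtopology W" using W(1) cm unfolding compatible_metric_def by simp
  then obtain r where r: "r > 0" "mball e r \<subseteq> W" using W(2) unfolding openin_mtopology by blast
  have ge: "\<forall>y\<in>(\<lambda>a. \<rho> e a) ` ?A. r \<le> y"
  proof
    fix y assume "y \<in> (\<lambda>a. \<rho> e a) ` ?A"
    then obtain a where a: "a \<in> ?A" "y = \<rho> e a" by blast
    then have "a \<notin> W" using W(3) by auto
    then have "a \<notin> mball e r" using r by blast
    then show "r \<le> y" using a e by auto
  qed
  have "r \<le> Inf ((\<lambda>a. \<rho> e a) ` ?A)" by (rule cInf_greatest) (use Ane ge in auto)
  then show ?thesis using False r by (simp add: acoef_def pdist_def)
qed

theorem lemma4p13:
  fixes \<rho> :: "'a::{semigroup_mult,inverse,topological_space} \<Rightarrow> 'a \<Rightarrow> real"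
    and bs :: "nat \<Rightarrow> 'a"
    and db :: "'a \<Rightarrow> 'a \<Rightarrow> 'a \<Rightarrow> real"
    and c :: "'a \<Rightarrow> 'a"
    and t :: "'a \<Rightarrow> nat \<Rightarrow> 'a"
  assumes S: "compact_hausdorff_topological_semigroup TYPE('a)"
    and Cl: "clifford_inverse_semigroup TYPE('a)"
    and B1: "perfect_semilattice_E TYPE('a)" "metrizable_space (top_of_set (idems::'a set))"
    and B2: "\<forall>e\<in>(idems::'a set). compact (grp e) \<and> metrizable_space (top_of_set (grp e))"
    and B3: "inverse_limit_preserving TYPE('a)"
    and rho: "compatible_metric idems \<rho>" "\<forall>e\<in>idems. \<forall>f\<in>idems. \<rho> e f \<le> 1"
    and basis: "is_basis (bs ` {1..})"
    and dbm: "\<forall>b\<in>bs ` {1..}. compatible_metric (grp b) (db b) \<and> (\<forall>x\<in>grp b. \<forall>y\<in>grp b. db b x y \<le> 1)"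
    and cb: "\<forall>b\<in>bs ` {1..}. c b \<in> grp b"
    and tb: "\<forall>b\<in>bs ` {1..}. (\<forall>k\<ge>1. t b k \<in> grp b) \<and> (top_of_set (grp b)) closure_of (t b ` {1..}) = grp b"
  shows "Metric_space (UNIV::'a set) (dmet \<rho> bs db c t)
         \<and> (\<forall>x y. 0 \<le> dmet \<rho> bs db c t x y \<and> dmet \<rho> bs db c t x y \<le> 3)"
proof -
  define Bs where "Bs = bs ` {1..}"
  have bsB: "bs (Suc j) \<in> Bs" for j unfolding Bs_def by auto
  have BI: "Bs \<subseteq> idems" using basis unfolding is_basis_def Bs_def by blast
  have rhoM: "Metric_space idems \<rho>" using rho(1) unfolding compatible_metric_def by blast
  have EI: "x * inverse x \<in> idems" for x :: 'a by (rule e_idem[OF Cl])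
  have dbM: "Metric_space (grp b) (db b)" if "b \<in> Bs" for b
    using dbm that unfolding Bs_def compatible_metric_def by blast
  have db01: "0 \<le> db b u w \<and> db b u w \<le> 1" if "b \<in> Bs" "u \<in> grp b" "w \<in> grp b" for b u w
    using dbm that Metric_space.nonneg[OF dbM[OF that(1)]] unfolding Bs_def by blast
  have tk: "t b (Suc k) \<in> grp b" if "b \<in> Bs" for b k
    using tb that unfolding Bs_def by auto
  have ph: "phat c (x * inverse x) b x \<in> grp b" if "b \<in> Bs" for b x
  proof (cases "sleq b (x * inverse x)")
    case True
    then show ?thesis using grp_mult[OF Cl B1(1), of b x] BI that by (auto simp: phat_def)
  next
    case False
    then show ?thesis using cb that unfolding Bs_def by (auto simp: phat_def)
  qed
  define a where "a b x = acoef \<rho> b (x * inverse x)" for b x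
  define v where "v b x k = a b x * db b (phat c (x * inverse x) b x) (t b (Suc k))" for b x k
  have a01: "0 \<le> a b x \<and> a b x \<le> 1" for b x
    unfolding a_def by (rule acoef_bounds[OF rhoM rho(2) EI])
  have v01: "0 \<le> v b x k \<and> v b x k \<le> 1" if "b \<in> Bs" for b x k
  proof -
    have "0 \<le> db b (phat c (x * inverse x) b x) (t b (Suc k)) \<and> db b (phat c (x * inverse x) b x) (t b (Suc k)) \<le> 1"
      using db01[OF that ph[OF that] tk[OF that]] .
    then show ?thesis using a01[of b x] unfolding v_def by (simp add: mult_le_one)
  qed
  have vd: "0 \<le> \<bar>v b x k - v b y k\<bar> \<and> \<bar>v b x k - v b y k\<bar> \<le> 1" if "b \<in> Bs" for b x y k
    using v01[OF that, of x k] v01[OF that, of y k] by auto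
  define Q where "Q b x y = (\<Sum>k. (1/2::real)^Suc k * \<bar>v b x k - v b y k\<bar>)" for b x y
  have Pb_eq: "Pb \<rho> db c t b x y = \<bar>a b x - a b y\<bar> + Q b x y" for b x y
    unfolding Pb_def Let_def a_def v_def Q_def by simp
  have Qs: "summable (\<lambda>k. (1/2::real)^Suc k * \<bar>v b x k - v b y k\<bar>)" "0 \<le> Q b x y" "Q b x y \<le> 1"
    if "b \<in> Bs" for b x y
    using half_sum[of "\<lambda>k. \<bar>v b x k - v b y k\<bar>" 1] vd[OF that] unfolding Q_def by auto
  have P02: "0 \<le> Pb \<rho> db c t b x y \<and> Pb \<rho> db c t b x y \<le> 2" if "b \<in> Bs" for b x y
    using Qs(2,3)[OF that, of x y] a01[of b x] a01[of b y] unfolding Pb_eq by auto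
  define R where "R x y = (\<Sum>j. (1/2::real)^Suc j * Pb \<rho> db c t (bs (Suc j)) x y)" for x y
  have dm_eq: "dmet \<rho> bs db c t x y = \<rho> (x * inverse x) (y * inverse y) + R x y" for x y
    unfolding dmet_def R_def by simp
  have Rs: "summable (\<lambda>j. (1/2::real)^Suc j * Pb \<rho> db c t (bs (Suc j)) x y)" "0 \<le> R x y" "R x y \<le> 2"
    for x y
    using half_sum[of "\<lambda>j. Pb \<rho> db c t (bs (Suc j)) x y" 2] P02[OF bsB] unfolding R_def by auto
  have bounds: "0 \<le> dmet \<rho> bs db c t x y \<and> dmet \<rho> bs db c t x y \<le> 3" for x y
    using Rs(2,3)[of x y] Metric_space.nonneg[OF rhoM, of "x * inverse x" "y * inverse y"]
      rho(2) EI[of x] EI[of y] unfolding dm_eq by fastforce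
  have Qsym: "Q b x y = Q b y x" for b x y unfolding Q_def by (simp add: abs_minus_commute)
  have Psym: "Pb \<rho> db c t b x y = Pb \<rho> db c t b y x" for b x y
    unfolding Pb_eq by (simp add: Qsym abs_minus_commute)
  have sym: "dmet \<rho> bs db c t x y = dmet \<rho> bs db c t y x" for x y
    unfolding dm_eq R_def using Psym Metric_space.commute[OF rhoM] by simp
  have Qtri: "Q b x z \<le> Q b x y + Q b y z" if "b \<in> Bs" for b x y z
  proof -
    have "Q b x z \<le> (\<Sum>k. (1/2::real)^Suc k * \<bar>v b x k - v b y k\<bar> + (1/2::real)^Suc k * \<bar>v b y k - v b z k\<bar>)"
      unfolding Q_def
    proof (rule suminf_le[OF _ Qs(1)[OF that] summable_add[OF Qs(1)[OF that] Qs(1)[OF that]]])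
      fix k
      have "\<bar>v b x k - v b z k\<bar> \<le> \<bar>v b x k - v b y k\<bar> + \<bar>v b y k - v b z k\<bar>" by linarith
      then have "(1/2::real)^Suc k * \<bar>v b x k - v b z k\<bar> \<le> (1/2::real)^Suc k * (\<bar>v b x k - v b y k\<bar> + \<bar>v b y k - v b z k\<bar>)"
        by (rule mult_left_mono) simp
      then show "(1/2::real)^Suc k * \<bar>v b x k - v b z k\<bar> \<le> (1/2::real)^Suc k * \<bar>v b x k - v b y k\<bar> + (1/2::real)^Suc k * \<bar>v b y k - v b z k\<bar>"
        by (simp add: distrib_left)
    qed
    also have "\<dots> = Q b x y + Q b y z"
      unfolding Q_def by (rule suminf_add[OF Qs(1)[OF that] Qs(1)[OF that], symmetric])
    finally show ?thesis .
  qed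
  have Ptri: "Pb \<rho> db c t b x z \<le> Pb \<rho> db c t b x y + Pb \<rho> db c t b y z" if "b \<in> Bs" for b x y z
    using Qtri[OF that, of x z y] unfolding Pb_eq by linarith
  have Rtri: "R x z \<le> R x y + R y z" for x y z
  proof -
    have "R x z \<le> (\<Sum>j. (1/2::real)^Suc j * Pb \<rho> db c t (bs (Suc j)) x y + (1/2::real)^Suc j * Pb \<rho> db c t (bs (Suc j)) y z)"
      unfolding R_def
    proof (rule suminf_le[OF _ Rs(1) summable_add[OF Rs(1) Rs(1)]])
      fix j
      have "(1/2::real)^Suc j * Pb \<rho> db c t (bs (Suc j)) x z \<le> (1/2::real)^Suc j * (Pb \<rho> db c t (bs (Suc j)) x y + Pb \<rho> db c t (bs (Suc j)) y z)"
        by (rule mult_left_mono[OF Ptri[OF bsB]]) simp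
      then show "(1/2::real)^Suc j * Pb \<rho> db c t (bs (Suc j)) x z \<le> (1/2::real)^Suc j * Pb \<rho> db c t (bs (Suc j)) x y + (1/2::real)^Suc j * Pb \<rho> db c t (bs (Suc j)) y z"
        by (simp add: distrib_left)
    qed
    also have "\<dots> = R x y + R y z"
      unfolding R_def by (rule suminf_add[OF Rs(1) Rs(1), symmetric])
    finally show ?thesis .
  qed
  have tri: "dmet \<rho> bs db c t x z \<le> dmet \<rho> bs db c t x y + dmet \<rho> bs db c t y z" for x y z
    using Rtri[of x z y] Metric_space.triangle[OF rhoM EI[of x] EI[of y] EI[of z]]
    unfolding dm_eq by linarith
  have refl: "dmet \<rho> bs db c t x x = 0" for x
    using Metric_space.zero[OF rhoM EI[of x] EI[of x]] unfolding dm_eq R_def Pb_eq Q_def by simp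
  have sep: "x = y" if z: "dmet \<rho> bs db c t x y = 0" for x y
  proof -
    define e where "e = x * inverse x"
    define f where "f = y * inverse y"
    have eI: "e \<in> idems" and fI: "f \<in> idems" unfolding e_def f_def by (rule EI)+
    have r0: "\<rho> e f = 0" and R0: "R x y = 0"
      using z Rs(2)[of x y] Metric_space.nonneg[OF rhoM, of e f] unfolding dm_eq e_def f_def by linarith+
    have ef: "e = f" using r0 Metric_space.zero[OF rhoM eI fI] by simp
    have "\<forall>j. (1/2::real)^Suc j * Pb \<rho> db c t (bs (Suc j)) x y = 0"
      using R0 unfolding R_def
      by (subst (asm) suminf_eq_zero_iff[OF Rs(1)]) (use P02[OF bsB] in auto)
    then have P0: "Pb \<rho> db c t (bs (Suc j)) x y = 0" for j by simp
    have B0: "Pb \<rho> db c t b x y = 0" if bB0: "b \<in> Bs" for b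
    proof -
      obtain n where n: "n \<ge> 1" "b = bs n" using bB0 unfolding Bs_def by auto
      then have "b = bs (Suc (n - 1))" by simp
      then show ?thesis using P0 by simp
    qed
    have veq: "v b x k = v b y k" if "b \<in> Bs" for b k
    proof -
      have "Q b x y = 0" using B0[OF that] Qs(2)[OF that, of x y] unfolding Pb_eq by linarith
      then have "\<forall>k. (1/2::real)^Suc k * \<bar>v b x k - v b y k\<bar> = 0"
        unfolding Q_def by (subst (asm) suminf_eq_zero_iff[OF Qs(1)[OF that]]) auto
      then show ?thesis by simp
    qed
    define D0 where "D0 = {b \<in> bs ` {1..}. way_below b e}"
    have bxy: "b * x = b * y" if b: "b \<in> D0" for b
    proof -
      have bB: "b \<in> Bs" and wb: "way_below b e" using b unfolding D0_def Bs_def by auto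
      have bI: "b \<in> idems" using bB BI by blast
      have apos: "0 < a b x" unfolding a_def e_def[symmetric] by (rule acoef_pos[OF B1(1) rho(1) eI wb])
      have aeq: "a b y = a b x" unfolding a_def e_def[symmetric] f_def[symmetric] ef ..
      have le: "sleq b e" by (rule wb_le[OF eI wb])
      have phx: "phat c (x * inverse x) b x = b * x" using le unfolding e_def phat_def by simp
      have phy: "phat c (y * inverse y) b y = b * y" using le unfolding ef f_def phat_def by simp
      have dk: "db b (b * x) (t b (Suc k)) = db b (b * y) (t b (Suc k))" for k
        using veq[OF bB, of k] apos aeq unfolding v_def phx phy by simp
      have T: "t b ` {1..} \<subseteq> grp b" using tb bB unfolding Bs_def by auto
      have cl: "Metric_space.mtopology (grp b) (db b) closure_of (t b ` {1..}) = grp b"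
        using dbm tb bB unfolding Bs_def compatible_metric_def by auto
      have xg: "b * x \<in> grp b" using grp_mult[OF Cl B1(1) bI] le unfolding e_def by blast
      have yg: "b * y \<in> grp b" using grp_mult[OF Cl B1(1) bI] le unfolding ef f_def by blast
      have "\<forall>w\<in>t b ` {1..}. db b (b * x) w = db b (b * y) w"
      proof
        fix w assume "w \<in> t b ` {1..}"
        then obtain n where "n \<ge> 1" "w = t b n" by auto
        then have "w = t b (Suc (n - 1))" by simp
        then show "db b (b * x) w = db b (b * y) w" using dk by simp
      qed
      then show ?thesis by (rule dense_sep[OF dbM[OF bB] cl T xg yg])
    qed
    have Dprops: "D0 \<subseteq> idems \<and> D0 \<noteq> {} \<and> up_directed D0 \<and> is_sup D0 e"
      using basis eI BI unfolding is_basis_def D0_def Bs_def up_directed_def by auto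
    let ?F = "\<lambda>g. restrict (\<lambda>b. b * g) D0"
    have "homeomorphic_map (top_of_set (grp e))
             (subtopology (product_topology (\<lambda>b. top_of_set (grp b)) D0) (inv_limit D0)) ?F"
      using B3[unfolded inverse_limit_preserving_def, rule_format, OF Dprops] by (simp add: Let_def)
    then have inj: "inj_on ?F (grp e)" using homeomorphic_imp_injective_map by fastforce
    have xe: "x \<in> grp e" unfolding grp_def e_def by simp
    have ye: "y \<in> grp e" unfolding grp_def ef f_def by simp
    have "?F x = ?F y" using bxy by (auto simp: restrict_def)
    then show ?thesis using inj xe ye by (meson inj_onD)
  qed
  have "Metric_space (UNIV::'a set) (dmet \<rho> bs db c t)"
    unfolding Metric_space_def
    using bounds sym tri refl sep by metis
  then show ?thesis using bounds by blast
qed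

end
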